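(* For $n\ge 2$ and $g\ge1$ let $\mathcal M^{\mathrm o}_g(n)$ be the number of MAB pairs $(u,v)$ of binary words with $|u|=|v|=n$ and $\mathrm{lsb}(u,v)+\mathrm{lsb}(v,u)-n=g$. Then $$\mathcal M^{\mathrm o}_1(n)=2\sum_{i=2}^{n-1}\sum_{l_1=1}^{n-i}\sum_{m=l_1+1}^{i+l_1-1}\frac{1}{(i-1)(n-i)}\binom{n-i}{l_1}\binom{n-i}{l_1-1}\binom{i-1}{m-l_1}\binom{i-1}{m-l_1-1},$$ and $$\mathcal M^{\mathrm o}_2(n)=2\sum_{i=3}^{n-2}\sum_{l_1=2}^{n-i}\sum_{m=l_1+2}^{i+l_1-2}\frac{4}{(i-2)(n-i)}\binom{n-i}{l_1}\binom{n-i}{l_1-2}\binom{i-2}{m-l_1}\binom{i-2}{m-l_1-2}$$ (empty sums are $0$).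
   Context: Let $\Sigma=\{a,b\}$. For a word $w$ and a letter $c$, $|w|_c$ denotes the number of occurrences of $c$ in $w$. Two words $x,y$ are abelian equivalent, written $x\sim_{\mathrm{abl}}y$, if $|x|_c=|y|_c$ for all $c\in\Sigma$. For words $u,v$: a pair $(x,y)$ is an internal abelian-border of $(u,v)$ if $x$ is a nonempty proper suffix of $u$, $y$ is a proper prefix of $v$, and $x\sim_{\mathrm{abl}}y$; it is an external abelian-border of $(u,v)$ if $x$ is a nonempty proper prefix of $u$, $y$ is a proper suffix of $v$, and $x\sim_{\mathrm{abl}}y$. The pair $(u,v)$ is mutually abelian-bordered (MAB) if it has both an internal and an external abelian-border, and mutually abelian-unbordered (MAU) if it has neither. If $(u,v)$ has an internal abelian-border, $\mathrm{sb}(u,v)$ denotes its internal abelian-border $(x,y)$ of minimal length and $\mathrm{lsb}(u,v)=|x|$ is that minimal length. Binomial coefficients $\binom{N}{r}$ are $0$ when $r<0$ or $r>N$. *)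

theory Defs
  imports Complex_Main "HOL-Library.Sublist"
begin

datatype letter = La | Lb

type_synonym word = "letter list"

definition abel_equiv :: "word \<Rightarrow> word \<Rightarrow> bool" where
  "abel_equiv x y \<longleftrightarrow> (\<forall>c. count_list x c = count_list y c)"

definition int_aborder :: "word \<Rightarrow> word \<Rightarrow> word \<Rightarrow> word \<Rightarrow> bool" where
  "int_aborder u v x y \<longleftrightarrow> x \<noteq> [] \<and> strict_suffix x u \<and> strict_prefix y v \<and> abel_equiv x y"

definition ext_aborder :: "word \<Rightarrow> word \<Rightarrow> word \<Rightarrow> word \<Rightarrow> bool" where
  "ext_aborder u v x y \<longleftrightarrow> x \<noteq> [] \<and> strict_prefix x u \<and> strict_suffix y v \<and> abel_equiv x y"

definition MAB :: "word \<Rightarrow> word \<Rightarrow> bool" where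
  "MAB u v \<longleftrightarrow> (\<exists>x y. int_aborder u v x y) \<and> (\<exists>x y. ext_aborder u v x y)"

definition lsb :: "word \<Rightarrow> word \<Rightarrow> nat" where
  "lsb u v = (LEAST k. \<exists>x y. int_aborder u v x y \<and> length x = k)"

definition Mo :: "nat \<Rightarrow> nat \<Rightarrow> nat" where
  "Mo g n = card {(u, v). length u = n \<and> length v = n \<and> MAB u v \<and>
                int (lsb u v) + int (lsb v u) - int n = int g}"

end

theory Submission
  imports Defs
begin


definition stp :: "bool \<Rightarrow> int" where "stp b = (if b then 1 else -1)"
definition ht :: "bool list \<Rightarrow> int" where "ht w = sum_list (map stp w)"
definition H :: "bool list \<Rightarrow> nat \<Rightarrow> int" where "H w t = ht (take t w)"

lemma ht_Nil[simp]: "ht [] = 0" by (simp add: ht_def)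
lemma ht_Cons[simp]: "ht (x#xs) = stp x + ht xs" by (simp add: ht_def)
lemma ht_append[simp]: "ht (xs@ys) = ht xs + ht ys" by (simp add: ht_def)
lemma ht_rev[simp]: "ht (rev xs) = ht xs" by (induction xs) auto
lemma ht_notmap[simp]: "ht (map Not xs) = - ht xs"
  by (induction xs) (auto simp: stp_def)
lemma stp_cases: "stp b = 1 \<or> stp b = -1" by (simp add: stp_def)

lemma H_0[simp]: "H w 0 = 0" by (simp add: H_def)
lemma H_Suc: "t < length w \<Longrightarrow> H w (Suc t) = H w t + stp (w!t)"
  by (simp add: H_def take_Suc_conv_app_nth)
lemma H_len: "length w \<le> t \<Longrightarrow> H w t = ht w" by (simp add: H_def)
lemma H_app_le: "t \<le> length xs \<Longrightarrow> H (xs@ys) t = H xs t" by (simp add: H_def)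
lemma H_app_ge: "length xs \<le> t \<Longrightarrow> H (xs@ys) t = ht xs + H ys (t - length xs)"
  by (simp add: H_def)
lemma H_take: "t \<le> T \<Longrightarrow> H (take T w) t = H w t" by (simp add: H_def min_def)
lemma H_Cons_Suc[simp]: "H (x#w) (Suc t) = stp x + H w t" by (simp add: H_def)
lemma H_notmap[simp]: "H (map Not w) t = - H w t" by (simp add: H_def take_map)

lemma ht_parity: "even (ht w + int (length w))"
proof (induction w)
  case (Cons x w)
  have "ht (x#w) + int(length(x#w)) = (ht w + int (length w)) + (stp x + 1)" by simp
  moreover have "even (stp x + 1)" by (simp add: stp_def)
  ultimately show ?case using Cons by simp
qed simp

lemma H_parity: "t \<le> length w \<Longrightarrow> even (H w t + int t)"
  using ht_parity[of "take t w"] by (simp add: H_def min_def)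

lemma sign_const:
  assumes "T \<le> length w" "\<forall>t\<in>{T0..T}. H w t \<noteq> c"
  shows "(\<forall>t\<in>{T0..T}. H w t > c) \<or> (\<forall>t\<in>{T0..T}. H w t < c)"
  using assms
proof (induction T)
  case 0 then show ?case by (cases "T0 = 0") auto
next
  case (Suc T)
  show ?case
  proof (cases "T0 \<le> T")
    case False
    then have "{T0..Suc T} \<subseteq> {Suc T}" by auto
    then show ?thesis using Suc.prems by (auto simp: subset_iff)
  next
    case True
    have ih: "(\<forall>t\<in>{T0..T}. H w t > c) \<or> (\<forall>t\<in>{T0..T}. H w t < c)"
      using Suc by auto
    have st: "H w (Suc T) = H w T + stp (w!T)" using Suc.prems H_Suc by auto
    have ne: "H w (Suc T) \<noteq> c" using Suc.prems True by auto
    have TT: "T \<in> {T0..T}" using True by auto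
    have eq: "{T0..Suc T} = insert (Suc T) {T0..T}" using True by auto
    from ih show ?thesis
    proof
      assume a: "\<forall>t\<in>{T0..T}. H w t > c"
      then have "H w (Suc T) > c" using TT st ne stp_cases[of "w!T"] by force
      then show ?thesis using a eq by auto
    next
      assume a: "\<forall>t\<in>{T0..T}. H w t < c"
      then have "H w (Suc T) < c" using TT st ne stp_cases[of "w!T"] by force
      then show ?thesis using a eq by auto
    qed
  qed
qed



definition cA :: "word \<Rightarrow> nat" where "cA x = count_list x La"

lemma len_count: "length x = count_list x La + count_list x Lb"
proof (induction x)
  case (Cons a x) then show ?case by (cases a) auto
qed simp

lemma letter_cases2: "(c::letter) = La \<or> c = Lb" by (cases c) auto

lemma abel_iff: "abel_equiv x y \<longleftrightarrow> length x = length y \<and> cA x = cA y"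
proof
  assume "abel_equiv x y"
  then show "length x = length y \<and> cA x = cA y"
    unfolding abel_equiv_def cA_def using len_count[of x] len_count[of y] by metis
next
  assume a: "length x = length y \<and> cA x = cA y"
  then have "count_list x Lb = count_list y Lb"
    unfolding cA_def using len_count[of x] len_count[of y] by simp
  then show "abel_equiv x y" unfolding abel_equiv_def using a letter_cases2 cA_def by metis
qed

lemma int_border_k:
  assumes "length u = n" "length v = n"
  shows "(\<exists>x y. int_aborder u v x y \<and> length x = k) \<longleftrightarrow>
          (1 \<le> k \<and> k < n \<and> cA (drop (n-k) u) = cA (take k v))"
proof
  assume "\<exists>x y. int_aborder u v x y \<and> length x = k"
  then obtain x y where i: "int_aborder u v x y" and lx: "length x = k" by blast
  from i have xn: "x \<noteq> []" and sx: "strict_suffix x u" and py: "strict_prefix y v"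
    and ab: "abel_equiv x y" unfolding int_aborder_def by auto
  have "k < n" using suffix_length_less[OF sx] lx assms by simp
  moreover have "1 \<le> k" using xn lx by (cases x) auto
  moreover have "x = drop (n-k) u"
  proof -
    from sx obtain zs where "u = zs @ x" unfolding strict_suffix_def suffix_def by blast
    then show ?thesis using lx assms by simp
  qed
  moreover have "y = take k v"
  proof -
    from py obtain zs where "v = y @ zs" unfolding strict_prefix_def prefix_def by blast
    moreover have "length y = k" using ab lx abel_iff by simp
    ultimately show ?thesis by simp
  qed
  ultimately show "1 \<le> k \<and> k < n \<and> cA (drop (n-k) u) = cA (take k v)"
    using ab abel_iff by simp
next
  assume a: "1 \<le> k \<and> k < n \<and> cA (drop (n-k) u) = cA (take k v)"
  let ?x = "drop (n-k) u" and ?y = "take k v"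
  have "int_aborder u v ?x ?y"
    unfolding int_aborder_def strict_suffix_def strict_prefix_def
  proof (intro conjI)
    have "length ?x = k" using a assms by simp
    then show "?x \<noteq> []" using a by auto
    show "suffix ?x u" by (rule suffix_drop)
    show "?x \<noteq> u"
    proof
      assume "?x = u"
      then have "length ?x = n" using assms by simp
      then show False using a assms by simp
    qed
    show "prefix ?y v" by (rule take_is_prefix)
    show "?y \<noteq> v"
    proof
      assume "?y = v"
      then have "length ?y = n" using assms by simp
      then show False using a assms by simp
    qed
    show "abel_equiv ?x ?y" using a assms abel_iff by simp
  qed
  moreover have "length ?x = k" using a assms by simp
  ultimately show "\<exists>x y. int_aborder u v x y \<and> length x = k" by blast
qed

lemma ext_int: "ext_aborder u v x y \<longleftrightarrow> int_aborder v u y x"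
  unfolding ext_aborder_def int_aborder_def using abel_iff by (auto simp: abel_equiv_def)

definition encp :: "(letter \<times> letter) list \<Rightarrow> bool list" where
  "encp ps = concat (map (\<lambda>(x,y). [x = La, y = Lb]) ps)"
definition enc :: "word \<Rightarrow> word \<Rightarrow> bool list" where
  "enc u v = encp (zip (rev u) v)"

lemma encp_Nil[simp]: "encp [] = []" by (simp add: encp_def)
lemma encp_Cons[simp]: "encp ((x,y)#ps) = [x = La, y = Lb] @ encp ps" by (simp add: encp_def)
lemma length_encp[simp]: "length (encp ps) = 2 * length ps"
  by (induction ps) auto
lemma take_encp: "take (2*k) (encp ps) = encp (take k ps)"
proof (induction ps arbitrary: k)
  case (Cons p ps) then show ?case by (cases p; cases k) auto
qed simp

lemma cA_Cons[simp]: "cA (x#xs) = (if x = La then 1 else 0) + cA xs" by (simp add: cA_def)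
lemma cA_Nil[simp]: "cA [] = 0" by (simp add: cA_def)
lemma cA_append[simp]: "cA (xs@ys) = cA xs + cA ys" by (simp add: cA_def)
lemma cA_rev[simp]: "cA (rev xs) = cA xs" by (induction xs) auto

lemma ht_encp: "ht (encp ps) = 2 * (int (cA (map fst ps)) - int (cA (map snd ps)))"
proof (induction ps)
  case (Cons p ps)
  obtain x y where p: "p = (x,y)" by force
  show ?case using Cons p by (cases x; cases y) (auto simp: stp_def)
qed simp

lemma H_enc:
  assumes "length u = length v"
  shows "H (enc u v) (2*k) = 2 * (int (cA (take k (rev u))) - int (cA (take k v)))"
proof -
  have "H (enc u v) (2*k) = ht (encp (take k (zip (rev u) v)))"
    by (simp add: H_def enc_def take_encp)
  also have "\<dots> = 2 * (int (cA (take k (rev u))) - int (cA (take k v)))"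
    using assms by (simp add: ht_encp take_zip)
  finally show ?thesis .
qed

lemma Zcond:
  assumes "length u = n" "length v = n" "k \<le> n"
  shows "cA (drop (n-k) u) = cA (take k v) \<longleftrightarrow> H (enc u v) (2*k) = 0"
  using assms by (simp add: H_enc take_rev)

lemma aux_lin: fixes a b c d e f :: int
  shows "a = b + c \<Longrightarrow> d = e + f \<Longrightarrow> (2*(c - e) = 2*(a - d)) = (f = b)"
  by arith

lemma Econd:
  assumes "length u = n" "length v = n" "k \<le> n"
  shows "cA (drop (n-k) v) = cA (take k u) \<longleftrightarrow> H (enc u v) (2*(n-k)) = H (enc u v) (2*n)"
proof -
  have h1: "H (enc u v) (2*(n-k)) = 2 * (int (cA (drop k u)) - int (cA (take (n-k) v)))"
    using assms by (simp add: H_enc take_rev)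
  have h2: "H (enc u v) (2*n) = 2 * (int (cA u) - int (cA v))"
    using assms by (simp add: H_enc)
  have u: "cA u = cA (take k u) + cA (drop k u)"
    by (metis append_take_drop_id cA_append)
  have v: "cA v = cA (take (n-k) v) + cA (drop (n-k) v)"
    by (metis append_take_drop_id cA_append)
  have u': "int (cA u) = int (cA (take k u)) + int (cA (drop k u))" using u by simp
  have v': "int (cA v) = int (cA (take (n-k) v)) + int (cA (drop (n-k) v))" using v by simp
  have "cA (drop (n-k) v) = cA (take k u) \<longleftrightarrow> int (cA (drop (n-k) v)) = int (cA (take k u))" by simp
  have "int (cA (drop (n-k) v)) = int (cA (take k u)) \<longleftrightarrow> 2 * (int (cA (drop k u)) - int (cA (take (n - k) v))) = 2 * (int (cA u) - int (cA v))"
    using aux_lin[OF u' v'] by simp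
  then show ?thesis unfolding h1 h2 by simp
qed

lemma int_eq_iff: "(int a + int b - int n = int g) = (a + b = n + g)" by linarith

definition Qw :: "nat \<Rightarrow> nat \<Rightarrow> bool list \<Rightarrow> bool" where
  "Qw g n w \<longleftrightarrow> (\<exists>k. 1 \<le> k \<and> k < n \<and> H w (2*k) = 0) \<and>
     (\<exists>k. 1 \<le> k \<and> k < n \<and> H w (2*(n-k)) = H w (2*n)) \<and>
     (LEAST k. 1 \<le> k \<and> k < n \<and> H w (2*k) = 0) +
     (LEAST k. 1 \<le> k \<and> k < n \<and> H w (2*(n-k)) = H w (2*n)) = n + g"

lemma key_pair:
  assumes u: "length u = n" and v: "length v = n"
  shows "(MAB u v \<and> int (lsb u v) + int (lsb v u) - int n = int g) \<longleftrightarrow> Qw g n (enc u v)"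
proof -
  have e1: "(\<exists>x y. int_aborder u v x y) \<longleftrightarrow> (\<exists>k. 1 \<le> k \<and> k < n \<and> H (enc u v) (2*k) = 0)"
  proof -
    have "(\<exists>x y. int_aborder u v x y) \<longleftrightarrow> (\<exists>k x y. int_aborder u v x y \<and> length x = k)" by blast
    also have "\<dots> \<longleftrightarrow> (\<exists>k. 1 \<le> k \<and> k < n \<and> H (enc u v) (2*k) = 0)"
      using int_border_k[OF u v] Zcond[OF u v] by (metis less_imp_le)
    finally show ?thesis .
  qed
  have e2: "(\<exists>x y. ext_aborder u v x y) \<longleftrightarrow> (\<exists>k. 1 \<le> k \<and> k < n \<and> H (enc u v) (2*(n-k)) = H (enc u v) (2*n))"
  proof -
    have "(\<exists>x y. ext_aborder u v x y) \<longleftrightarrow> (\<exists>k x y. int_aborder v u x y \<and> length x = k)"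
      using ext_int by blast
    also have "\<dots> \<longleftrightarrow> (\<exists>k. 1 \<le> k \<and> k < n \<and> H (enc u v) (2*(n-k)) = H (enc u v) (2*n))"
      using int_border_k[OF v u] Econd[OF u v] by (metis less_imp_le)
    finally show ?thesis .
  qed
  have l1: "lsb u v = (LEAST k. 1 \<le> k \<and> k < n \<and> H (enc u v) (2*k) = 0)"
    unfolding lsb_def using int_border_k[OF u v] Zcond[OF u v]
    by (metis (no_types, lifting) less_imp_le)
  have l2: "lsb v u = (LEAST k. 1 \<le> k \<and> k < n \<and> H (enc u v) (2*(n-k)) = H (enc u v) (2*n))"
    unfolding lsb_def using int_border_k[OF v u] Econd[OF u v]
    by (metis (no_types, lifting) less_imp_le)
  show ?thesis unfolding MAB_def Qw_def e1 e2 l1 l2 int_eq_iff by blast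
qed

lemma letter_eqI: "(x = La \<longleftrightarrow> y = La) \<Longrightarrow> (x::letter) = y"
  by (cases x; cases y) auto
lemma letter_eqI2: "(x = Lb \<longleftrightarrow> y = Lb) \<Longrightarrow> (x::letter) = y"
  by (cases x; cases y) auto

lemma encp_inj: "length ps = length qs \<Longrightarrow> encp ps = encp qs \<Longrightarrow> ps = qs"
proof (induction ps arbitrary: qs)
  case Nil then show ?case by simp
next
  case (Cons p ps)
  then obtain q qs' where q: "qs = q # qs'" by (cases qs) auto
  obtain x y where p: "p = (x,y)" by force
  obtain x' y' where q': "q = (x',y')" by force
  have e: "[x = La, y = Lb] @ encp ps = [x' = La, y' = Lb] @ encp qs'"
    using Cons.prems q p q' by simp
  then have h: "(x = La) = (x' = La)" "(y = Lb) = (y' = Lb)" "encp ps = encp qs'" by simp_all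
  from h(1) have "x = x'" by (rule letter_eqI)
  moreover from h(2) have "y = y'" by (rule letter_eqI2)
  moreover have "ps = qs'" using Cons.IH Cons.prems q h(3) by simp
  ultimately show ?case using q p q' by simp
qed

lemma enc_inj:
  assumes "length u = n" "length v = n" "length u' = n" "length v' = n" "enc u v = enc u' v'"
  shows "u = u' \<and> v = v'"
proof -
  have "zip (rev u) v = zip (rev u') v'"
    using assms by (intro encp_inj) (auto simp: enc_def)
  then have "map fst (zip (rev u) v) = map fst (zip (rev u') v')"
    "map snd (zip (rev u) v) = map snd (zip (rev u') v')" by auto
  then show ?thesis using assms by simp
qed

lemma enc_surj: "length w = 2*n \<Longrightarrow> \<exists>u v. length u = n \<and> length v = n \<and> w = enc u v"
proof (induction n arbitrary: w)
  case 0 then show ?case by (auto simp: enc_def)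
next
  case (Suc n)
  obtain a w1 where w1: "w = a # w1" using Suc.prems by (cases w) auto
  obtain b w' where w2: "w1 = b # w'" using Suc.prems w1 by (cases w1) auto
  have lw: "length w' = 2*n" using Suc.prems w1 w2 by simp
  obtain u' v' where uv: "length u' = n" "length v' = n" "w' = enc u' v'"
    using Suc.IH[OF lw] by blast
  define x where "x = (if a then La else Lb)"
  define y where "y = (if b then Lb else La)"
  have "enc (u'@[x]) (y#v') = [x = La, y = Lb] @ enc u' v'" by (simp add: enc_def)
  also have "[x = La, y = Lb] = [a, b]" by (simp add: x_def y_def)
  finally have "enc (u'@[x]) (y#v') = w" using w1 w2 uv by simp
  moreover have "length (u'@[x]) = Suc n" "length (y#v') = Suc n" using uv by auto
  ultimately show ?case by blast
qed

lemma Mo_walks: "Mo g n = card {w. length w = 2*n \<and> Qw g n w}"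
proof -
  define P where "P = {(u, v). length u = n \<and> length v = n \<and> MAB u v \<and>
                int (lsb u v) + int (lsb v u) - int n = int g}"
  have inj: "inj_on (case_prod enc) P"
  proof (rule inj_onI)
    fix p q assume "p \<in> P" "q \<in> P" "case_prod enc p = case_prod enc q"
    then show "p = q" unfolding P_def using enc_inj by (cases p; cases q) auto
  qed
  have img: "case_prod enc ` P = {w. length w = 2*n \<and> Qw g n w}"
  proof
    show "case_prod enc ` P \<subseteq> {w. length w = 2*n \<and> Qw g n w}"
    proof
      fix w assume "w \<in> case_prod enc ` P"
      then obtain u v where "(u,v) \<in> P" "w = enc u v" by auto
      then show "w \<in> {w. length w = 2*n \<and> Qw g n w}"
        unfolding P_def using key_pair[of u n v g] by (simp add: enc_def)
    qed
    show "{w. length w = 2*n \<and> Qw g n w} \<subseteq> case_prod enc ` P"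
    proof
      fix w assume "w \<in> {w. length w = 2*n \<and> Qw g n w}"
      then have lw: "length w = 2*n" and q: "Qw g n w" by auto
      obtain u v where uv: "length u = n" "length v = n" "w = enc u v" using enc_surj[OF lw] by blast
      then have "(u,v) \<in> P" unfolding P_def using q key_pair[of u n v g] by simp
      then show "w \<in> case_prod enc ` P" using uv by force
    qed
  qed
  have "Mo g n = card P" unfolding Mo_def P_def by simp
  also have "\<dots> = card (case_prod enc ` P)" using card_image[OF inj] by simp
  finally show ?thesis using img by simp
qed



definition PosG :: "nat \<Rightarrow> int \<Rightarrow> int \<Rightarrow> bool list set" where
  "PosG N s h = {w. length w = N \<and> (\<forall>t\<in>{1..N}. s + H w t \<ge> 1) \<and> s + ht w = h}"

lemma finite_PosG: "finite (PosG N s h)"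
proof -
  have "PosG N s h \<subseteq> {w. length w = N}" by (auto simp: PosG_def)
  moreover have "finite {w::bool list. length w = N}"
    using finite_lists_length_eq[of "UNIV::bool set"] by simp
  ultimately show ?thesis by (rule finite_subset)
qed

lemma PosG_0: "PosG 0 s h = (if s = h then {[]} else {})"
  by (auto simp: PosG_def)

lemma ball_Suc_iv: "(\<forall>t\<in>{1..Suc N}. P t) \<longleftrightarrow> P (Suc 0) \<and> (\<forall>t\<in>{1..N}. P (Suc t))"
proof
  assume "\<forall>t\<in>{1..Suc N}. P t" then show "P (Suc 0) \<and> (\<forall>t\<in>{1..N}. P (Suc t))" by auto
next
  assume R: "P (Suc 0) \<and> (\<forall>t\<in>{1..N}. P (Suc t))"
  show "\<forall>t\<in>{1..Suc N}. P t"
  proof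
    fix t assume t: "t \<in> {1..Suc N}"
    show "P t"
    proof (cases "t = 1")
      case True then show ?thesis using R by simp
    next
      case False
      then obtain t' where "t = Suc t'" "t' \<in> {1..N}" using t by (cases t) auto
      then show ?thesis using R by simp
    qed
  qed
qed

lemma Cons_in_PosG: "(x#w \<in> PosG (Suc N) s h) \<longleftrightarrow> (s + stp x \<ge> 1 \<and> w \<in> PosG N (s + stp x) h)"
proof -
  have "(\<forall>t\<in>{1..Suc N}. s + H (x#w) t \<ge> 1) \<longleftrightarrow>
        s + stp x \<ge> 1 \<and> (\<forall>t\<in>{1..N}. (s + stp x) + H w t \<ge> 1)"
    unfolding ball_Suc_iv by (simp add: add.assoc)
  then show ?thesis unfolding PosG_def by (auto simp: add.assoc)
qed

lemma PosG_Suc: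
  assumes "s \<ge> 0"
  shows "PosG (Suc N) s h = Cons True ` PosG N (s+1) h \<union> (if s \<ge> 2 then Cons False ` PosG N (s-1) h else {})"
proof
  show "PosG (Suc N) s h \<subseteq> Cons True ` PosG N (s+1) h \<union> (if s \<ge> 2 then Cons False ` PosG N (s-1) h else {})"
  proof
    fix w assume w: "w \<in> PosG (Suc N) s h"
    then obtain x w' where xw: "w = x # w'" by (cases w) (auto simp: PosG_def)
    show "w \<in> Cons True ` PosG N (s+1) h \<union> (if s \<ge> 2 then Cons False ` PosG N (s-1) h else {})"
    proof (cases x)
      case True
      then have "w' \<in> PosG N (s+1) h" using w xw Cons_in_PosG by (simp add: stp_def)
      then show ?thesis using xw True by auto
    next
      case False
      then have "w' \<in> PosG N (s-1) h" "s \<ge> 2" using w xw Cons_in_PosG[of x w' N s h] by (auto simp: stp_def)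
      then show ?thesis using xw False by auto
    qed
  qed
next
  show "Cons True ` PosG N (s+1) h \<union> (if s \<ge> 2 then Cons False ` PosG N (s-1) h else {}) \<subseteq> PosG (Suc N) s h"
    using assms Cons_in_PosG by (auto simp: stp_def)
qed

lemma card_PosG_Suc:
  assumes "s \<ge> 0"
  shows "card (PosG (Suc N) s h) = card (PosG N (s+1) h) + (if s \<ge> 2 then card (PosG N (s-1) h) else 0)"
proof -
  have d: "Cons True ` PosG N (s+1) h \<inter> (if s \<ge> 2 then Cons False ` PosG N (s-1) h else {}) = {}" by auto
  have "card (PosG (Suc N) s h) = card (Cons True ` PosG N (s+1) h) + card (if s \<ge> 2 then Cons False ` PosG N (s-1) h else {})"
    unfolding PosG_Suc[OF assms] by (rule card_Un_disjoint) (auto simp: finite_PosG d)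
  also have "\<dots> = card (PosG N (s+1) h) + (if s \<ge> 2 then card (PosG N (s-1) h) else 0)"
    by (simp add: card_image)
  finally show ?thesis .
qed

lemma card_PosG_Suc0: "card (PosG (Suc N) 0 h) = card (PosG N 1 h)"
  using card_PosG_Suc[of 0 N h] by simp

definition cb :: "nat \<Rightarrow> int \<Rightarrow> int" where
  "cb N r = (if r < 0 then 0 else int (N choose nat r))"

lemma cb_Suc: "cb (Suc N) r = cb N r + cb N (r - 1)"
proof (cases "r < 0")
  case True then show ?thesis by (simp add: cb_def)
next
  case False
  show ?thesis
  proof (cases "r = 0")
    case True then show ?thesis by (simp add: cb_def)
  next
    case False
    then have "nat r = Suc (nat (r - 1))" using \<open>\<not> r < 0\<close> by simp
    then show ?thesis using \<open>\<not> r < 0\<close> False by (simp add: cb_def)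
  qed
qed

lemma cb_0: "cb 0 r = (if r = 0 then 1 else 0)"
proof (cases "r > 0")
  case True
  then have "0 < nat r" by simp
  then show ?thesis using True by (simp add: cb_def)
qed (auto simp: cb_def)

definition F :: "nat \<Rightarrow> int \<Rightarrow> int \<Rightarrow> int" where
  "F N s h = (if even (int N + h - s) then cb N ((int N + h - s) div 2) - cb N ((int N + h + s) div 2) else 0)"

lemma F_zero: "F N 0 h = 0" by (simp add: F_def)

lemma F_Suc: "F (Suc N) s h = F N (s+1) h + F N (s-1) h"
proof (cases "even (int N + 1 + h - s)")
  case True
  then have "2 dvd (int N + 1 + h - s)" by simp
  then obtain q where q: "int N + 1 + h - s = 2*q" by (rule dvdE)
  have a1: "int (Suc N) + h - s = 2*q" using q by simp
  have a2: "int (Suc N) + h + s = 2*(q+s)" using q by simp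
  have b1: "int N + h - (s+1) = 2*(q-1)" using q by simp
  have b2: "int N + h + (s+1) = 2*(q+s)" using q by simp
  have c1: "int N + h - (s-1) = 2*q" using q by simp
  have c2: "int N + h + (s-1) = 2*(q+s-1)" using q by simp
  have "F (Suc N) s h = cb (Suc N) q - cb (Suc N) (q+s)"
    unfolding F_def a1 a2 by simp
  moreover have "F N (s+1) h = cb N (q-1) - cb N (q+s)"
    unfolding F_def b1 b2 by simp
  moreover have "F N (s-1) h = cb N q - cb N (q+s-1)"
    unfolding F_def c1 c2 by simp
  ultimately show ?thesis using cb_Suc[of N q] cb_Suc[of N "q+s"] by simp
next
  case False
  then have "odd (int (Suc N) + h - s)" "odd (int N + h - (s+1))" "odd (int N + h - (s-1))"
    by presburger+
  then show ?thesis unfolding F_def by simp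
qed

lemma card_PosG: "s \<ge> 1 \<Longrightarrow> h \<ge> 1 \<Longrightarrow> int (card (PosG N s h)) = F N s h"
proof (induction N arbitrary: s)
  case 0
  show ?case
  proof (cases "s = h")
    case True
    then have "nat s \<noteq> 0" using 0 by simp
    have "(h + s) div 2 \<noteq> 0" using 0 by simp
    then show ?thesis using True 0 by (simp add: PosG_0 F_def cb_0)
  next
    case False
    have "(h - s) div 2 \<noteq> 0 \<or> odd (h - s)" using False by presburger
    moreover have "(h + s) div 2 \<noteq> 0" using 0 by simp
    ultimately show ?thesis using False 0 by (auto simp: PosG_0 F_def cb_0)
  qed
next
  case (Suc N)
  have "int (card (PosG (Suc N) s h)) = int (card (PosG N (s+1) h)) + (if s \<ge> 2 then int (card (PosG N (s-1) h)) else 0)"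
    using card_PosG_Suc[of s N h] Suc.prems by simp
  also have "\<dots> = F N (s+1) h + F N (s-1) h"
  proof (cases "s \<ge> 2")
    case True then show ?thesis using Suc by simp
  next
    case False
    then have "s = 1" using Suc.prems by simp
    then show ?thesis using Suc by (simp add: F_zero)
  qed
  also have "\<dots> = F (Suc N) s h" by (simp add: F_Suc)
  finally show ?case .
qed

lemma cb_int: "cb N (int m) = int (N choose m)" by (simp add: cb_def)

lemma card_Pos_formula:
  assumes "k \<ge> 1" "g \<ge> 1"
  shows "int (card (PosG (2*k) 0 (2 * int g))) = int ((2*k-1) choose (k+g-1)) - int ((2*k-1) choose (k+g))"
proof -
  have e: "2*k = Suc (2*k-1)" using assms by simp
  have "int (card (PosG (2*k) 0 (2 * int g))) = F (2*k-1) 1 (2 * int g)"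
    by (subst e, subst card_PosG_Suc0, rule card_PosG) (use assms in auto)
  also have "\<dots> = cb (2*k-1) (int (k+g-1)) - cb (2*k-1) (int (k+g))"
  proof -
    have a1: "int (2*k-1) + 2 * int g - 1 = 2 * int (k+g-1)" using assms by simp
    have a2: "int (2*k-1) + 2 * int g + 1 = 2 * int (k+g)" using assms by simp
    show ?thesis unfolding F_def a1 a2 by simp
  qed
  also have "\<dots> = int ((2*k-1) choose (k+g-1)) - int ((2*k-1) choose (k+g))"
    by (simp only: cb_int)
  finally show ?thesis .
qed

definition BelG :: "nat \<Rightarrow> int \<Rightarrow> bool list set" where
  "BelG L c = {w. length w = L \<and> (\<forall>t<L. H w t < c) \<and> ht w = c}"

lemma H_rev: "t \<le> length w \<Longrightarrow> H (rev w) t = ht w - H w (length w - t)"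
proof -
  assume t: "t \<le> length w"
  have "ht w = ht (take (length w - t) w) + ht (drop (length w - t) w)"
    by (metis append_take_drop_id ht_append)
  then show ?thesis by (simp add: H_def take_rev)
qed

lemma rev_Bel: assumes w: "w \<in> BelG L c" shows "rev w \<in> PosG L 0 c"
proof -
    have "\<forall>t\<in>{1..L}. 0 + H (rev w) t \<ge> 1"
    proof
      fix t assume t: "t \<in> {1..L}"
      have L: "L = length w" "c = ht w" "\<forall>t<L. H w t < c" using w by (auto simp: BelG_def)
      then have "H w (L - t) < c" using t by auto
      then show "0 + H (rev w) t \<ge> 1" using t L H_rev[of t w] by simp
    qed
    then show "rev w \<in> PosG L 0 c" using w by (auto simp: BelG_def PosG_def)
qed

lemma rev_Pos: assumes w: "w \<in> PosG L 0 c" shows "rev w \<in> BelG L c"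
proof -
    have "\<forall>t<L. H (rev w) t < c"
    proof (intro allI impI)
      fix t assume t: "t < L"
      have L: "L = length w" "c = ht w" "\<forall>t\<in>{1..L}. 0 + H w t \<ge> 1" using w by (auto simp: PosG_def)
      have mem: "L - t \<in> {1..L}" using t by auto
      have "0 + H w (L - t) \<ge> 1" using L(3) mem by blast
      then have "H w (L - t) \<ge> 1" by simp
      moreover have "H (rev w) t = c - H w (L - t)" using t L(1,2) H_rev[of t w] by simp
      ultimately show "H (rev w) t < c" by linarith
    qed
    then show "rev w \<in> BelG L c" using w by (auto simp: BelG_def PosG_def)
qed

lemma card_BelG: "card (BelG L c) = card (PosG L 0 c)"
  by (rule bij_betw_same_card[of rev], rule bij_betw_byWitness[where f'=rev])
     (auto intro: rev_Bel rev_Pos)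



definition Jset :: "nat \<Rightarrow> nat \<Rightarrow> nat \<Rightarrow> bool list set" where
  "Jset g n k = (\<lambda>(w1,w2). w1 @ replicate (2*g) False @ w2) `
       (PosG (2*k) 0 (2 * int g) \<times> BelG (2*(n-g-k)) (2 * int g))"

lemma H_rep: "H (replicate m False) j = - int (min j m)"
  by (simp add: H_def ht_def stp_def take_replicate sum_list_replicate)

lemma ht_rep: "ht (replicate m False) = - int m"
  by (simp add: ht_def stp_def sum_list_replicate)

lemma D1:
  assumes k: "1 \<le> k" "k + g < n" and g: "g \<ge> 1"
    and w1: "w1 \<in> PosG (2*k) 0 (2 * int g)" and w2: "w2 \<in> BelG (2*(n-g-k)) (2 * int g)"
    and w: "w = w1 @ replicate (2*g) False @ w2"
  shows "length w = 2*n \<and> Qw g n w \<and> H w 1 > 0 \<and>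
         (LEAST j. 1 \<le> j \<and> j < n \<and> H w (2*j) = 0) = k + g"
proof -
  have l1: "length w1 = 2*k" and p1: "\<forall>t\<in>{1..2*k}. 0 + H w1 t \<ge> 1" and e1: "ht w1 = 2 * int g"
    using w1 by (auto simp: PosG_def)
  have l2: "length w2 = 2*(n-g-k)" and p2: "\<forall>t<2*(n-g-k). H w2 t < 2 * int g" and e2: "ht w2 = 2 * int g"
    using w2 by (auto simp: BelG_def)
  have lw: "length w = 2*n" using w l1 l2 k by simp
  have h1: "H w t = H w1 t" if "t \<le> 2*k" for t
    using that l1 w H_app_le[of t w1] by simp
  have h2: "H w t = 2 * int g - int (t - 2*k)" if "2*k \<le> t" "t \<le> 2*k + 2*g" for t
  proof -
    have "H w t = ht w1 + H (replicate (2*g) False @ w2) (t - 2*k)"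
      using that l1 w H_app_ge[of w1 t] by simp
    also have "\<dots> = ht w1 + H (replicate (2*g) False) (t - 2*k)"
      using that by (subst H_app_le) auto
    finally show ?thesis using that e1 H_rep by simp
  qed
  have h3: "H w t = H w2 (t - 2*k - 2*g)" if "2*k + 2*g \<le> t" for t
  proof -
    have "H w t = ht w1 + H (replicate (2*g) False @ w2) (t - 2*k)"
      using that l1 w H_app_ge[of w1 t] by simp
    also have "\<dots> = ht w1 + (ht (replicate (2*g) False) + H w2 (t - 2*k - 2*g))"
      using that by (subst H_app_ge) (auto simp: diff_diff_add)
    finally show ?thesis using e1 ht_rep by simp
  qed
  have z: "H w (2*(k+g)) = 0" using h2[of "2*(k+g)"] by simp
  have zmin: "H w (2*j) \<noteq> 0" if "1 \<le> j" "j < k + g" for j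
  proof (cases "2*j \<le> 2*k")
    case True
    then have "2*j \<in> {1..2*k}" using that by auto
    then have "1 \<le> 0 + H w1 (2*j)" using p1 by blast
    then show ?thesis using h1[OF True] by simp
  next
    case False
    then show ?thesis using h2[of "2*j"] that by simp
  qed
  have least1: "(LEAST j. 1 \<le> j \<and> j < n \<and> H w (2*j) = 0) = k + g"
    by (rule Least_equality) (use k z zmin in \<open>auto simp: not_less[symmetric]\<close>)
  have top: "H w (2*n) = 2 * int g"
    using h3[of "2*n"] k l2 e2 H_len[of w2] by simp
  have bk: "H w (2*k) = 2 * int g" using h1[of "2*k"] l1 e1 H_len[of w1] by simp
  have e: "H w (2*(n-(n-k))) = H w (2*n)" using bk top k by simp
  have emin: "H w (2*(n-j)) \<noteq> H w (2*n)" if "1 \<le> j" "j < n - k" for j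
  proof (cases "2*(n-j) \<le> 2*k + 2*g")
    case True
    then show ?thesis using h2[of "2*(n-j)"] that top by simp
  next
    case False
    then have "2*(n-j) - 2*k - 2*g < 2*(n-g-k)" using that by simp
    then show ?thesis using h3[of "2*(n-j)"] False p2 top by force
  qed
  have least2: "(LEAST j. 1 \<le> j \<and> j < n \<and> H w (2*(n-j)) = H w (2*n)) = n - k"
    by (rule Least_equality) (use k e emin in \<open>auto simp: not_less[symmetric]\<close>)
  have ex1: "\<exists>j. 1 \<le> j \<and> j < n \<and> H w (2*j) = 0" using k z by (intro exI[of _ "k+g"]) auto
  have ex2: "\<exists>j. 1 \<le> j \<and> j < n \<and> H w (2*(n-j)) = H w (2*n)" using k e by (intro exI[of _ "n-k"]) auto
  have q: "Qw g n w" unfolding Qw_def least1 least2 using ex1 ex2 k by simp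
  have "H w 1 = H w1 1" using h1[of 1] k by simp
  moreover have "1 \<in> {1..2*k}" using k by simp
  ultimately have "H w 1 > 0" using p1 by force
  then show ?thesis using lw q least1 by simp
qed


lemma stp_m1: "stp x = -1 \<Longrightarrow> x = False" by (cases x) (auto simp: stp_def)

lemma D2:
  assumes g: "g = 1 \<or> g = 2" and lw: "length w = 2*n" and q: "Qw g n w" and pos: "H w 1 > 0"
  shows "\<exists>k. 1 \<le> k \<and> k + g < n \<and> w \<in> Jset g n k"
proof -
  define Pz where "Pz = (\<lambda>j. 1 \<le> j \<and> j < n \<and> H w (2*j) = 0)"
  define Pe where "Pe = (\<lambda>j. 1 \<le> j \<and> j < n \<and> H w (2*(n-j)) = H w (2*n))"
  define a where "a = (LEAST j. Pz j)"
  define e where "e = (LEAST j. Pe j)"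
  have ex: "\<exists>j. Pz j" "\<exists>j. Pe j" and sum: "a + e = n + g"
    using q unfolding Qw_def Pz_def Pe_def a_def e_def by auto
  have Pa: "Pz a" unfolding a_def by (rule LeastI_ex[OF ex(1)])
  have Pee: "Pe e" unfolding e_def by (rule LeastI_ex[OF ex(2)])
  have na: "\<not> Pz j" if "j < a" for j using not_less_Least[of j Pz] that a_def by simp
  have ne: "\<not> Pe j" if "j < e" for j using not_less_Least[of j Pe] that e_def by simp
  define b where "b = n - e"
  have a1: "1 \<le> a" "a < n" "H w (2*a) = 0" using Pa Pz_def by auto
  have e1: "1 \<le> e" "e < n" using Pee Pe_def by auto
  have Hb: "H w (2*b) = H w (2*n)" using Pee b_def Pe_def by simp
  have ab: "a = b + g" "b \<ge> 1" using sum e1 b_def g by auto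
  define c where "c = H w (2*n)"
  have cev: "even c" using H_parity[of "2*n" w] lw c_def by simp
  have A: "\<forall>t\<in>{1..2*a-1}. H w t \<noteq> 0"
  proof
    fix t assume t: "t \<in> {1..2*a-1}"
    show "H w t \<noteq> 0"
    proof (cases "even t")
      case True then obtain j where tj: "t = 2*j" by blast
      then have j: "1 \<le> j" "j < a" using t by auto
      then have "\<not> Pz j" using na by simp
      then show ?thesis using tj j a1 Pz_def by auto
    next
      case False
      have "even (H w t + int t)" using H_parity[of t w] t a1 lw by auto
      then show ?thesis using False by auto
    qed
  qed
  have Apos: "\<forall>t\<in>{1..2*a-1}. H w t > 0"
  proof -
    have "(\<forall>t\<in>{1..2*a-1}. H w t > 0) \<or> (\<forall>t\<in>{1..2*a-1}. H w t < 0)"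
      using sign_const[of "2*a-1" w 1 0] A a1 lw by auto
    moreover have "1 \<in> {1..2*a-1}" using a1 by auto
    ultimately show ?thesis using pos by force
  qed
  have B: "\<forall>t\<in>{2*b+1..2*n-1}. H w t \<noteq> c"
  proof
    fix t assume t: "t \<in> {2*b+1..2*n-1}"
    show "H w t \<noteq> c"
    proof (cases "even t")
      case True then obtain j where tj: "t = 2*j" by blast
      then have j: "b < j" "j < n" using t by auto
      then have j': "1 \<le> n - j" "n - j < e" using b_def e1 by auto
      then have "\<not> Pe (n-j)" using ne by simp
      moreover have "n - (n - j) = j" using j by simp
      ultimately show ?thesis using tj j' j Pe_def c_def by auto
    next
      case False
      have "even (H w t + int t)" using H_parity[of t w] t lw by auto
      then show ?thesis using False cev by auto
    qed
  qed
  have cpos: "c > 0"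
  proof -
    have "2*b \<in> {1..2*a-1}" using ab g by auto
    then have "H w (2*b) > 0" using Apos by blast
    then show ?thesis using Hb c_def by simp
  qed
  have Bb: "\<forall>t\<in>{2*b+1..2*n-1}. H w t < c"
  proof -
    have "(\<forall>t\<in>{2*b+1..2*n-1}. H w t > c) \<or> (\<forall>t\<in>{2*b+1..2*n-1}. H w t < c)"
      using sign_const[of "2*n-1" w "2*b+1" c] B lw by auto
    moreover have "2*a \<in> {2*b+1..2*n-1}" using ab a1 g by auto
    ultimately show ?thesis using a1 cpos by force
  qed
  have st: "H w (Suc j) = H w j + stp (w!j)" if "j < 2*n" for j
    using H_Suc[of j w] that lw by simp
  have down: "c = 2 * int g \<and> (\<forall>j<2*g. w!(2*b+j) = False)"
  proof (cases "g = 1")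
    case True
    have r: "2*b+1 \<in> {1..2*a-1}" "2*b+1 \<in> {2*b+1..2*n-1}" using ab a1 True by auto
    have f: "H w (2*b+1) < c" "H w (2*b+1) > 0" using Apos Bb r by auto
    have s0: "H w (2*b+1) = c + stp (w!(2*b))" using st[of "2*b"] Hb c_def ab a1 by simp
    have s1: "H w (2*b+2) = H w (2*b+1) + stp (w!(2*b+1))" using st[of "2*b+1"] ab a1 by simp
    have z: "H w (2*b+2) = 0" using a1 ab True by simp
    have "stp (w!(2*b)) = -1 \<and> stp (w!(2*b+1)) = -1 \<and> c = 2"
      using f s0 s1 z stp_cases[of "w!(2*b)"] stp_cases[of "w!(2*b+1)"] by auto
    then have "w!(2*b) = False" "w!(2*b+1) = False" "c = 2" using stp_m1 by auto
    moreover have "j < 2 \<Longrightarrow> j = 0 \<or> j = 1" for j :: nat by auto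
    ultimately show ?thesis using True by fastforce
  next
    case False
    then have g2: "g = 2" using g by simp
    have r: "2*b+1 \<in> {1..2*a-1}" "2*b+1 \<in> {2*b+1..2*n-1}"
            "2*b+2 \<in> {1..2*a-1}" "2*b+2 \<in> {2*b+1..2*n-1}"
            "2*b+3 \<in> {1..2*a-1}" "2*b+3 \<in> {2*b+1..2*n-1}" using ab a1 g2 by auto
    have f: "H w (2*b+1) < c" "H w (2*b+1) > 0" "H w (2*b+2) < c" "H w (2*b+2) > 0"
      "H w (2*b+3) < c" "H w (2*b+3) > 0" using Apos Bb r by auto
    have s0: "H w (2*b+1) = c + stp (w!(2*b))" using st[of "2*b"] Hb c_def ab a1 by simp
    have s1: "H w (2*b+2) = H w (2*b+1) + stp (w!(2*b+1))" using st[of "2*b+1"] ab a1 g2 by simp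
    have e3: "Suc (2*b+2) = 2*b+3" "Suc (2*b+3) = 2*b+4" by simp_all
    have s2: "H w (2*b+3) = H w (2*b+2) + stp (w!(2*b+2))"
      using ab a1 g2 by (intro st[of "2*b+2", unfolded e3]) simp
    have s3: "H w (2*b+4) = H w (2*b+3) + stp (w!(2*b+3))"
      using ab a1 g2 by (intro st[of "2*b+3", unfolded e3]) simp
    have "2*a = 2*b+4" using ab g2 by simp
    then have z: "H w (2*b+4) = 0" using a1 by metis
    have "stp (w!(2*b)) = -1 \<and> stp (w!(2*b+1)) = -1 \<and> stp (w!(2*b+2)) = -1 \<and> stp (w!(2*b+3)) = -1 \<and> c = 4"
      using f s0 s1 s2 s3 z stp_cases[of "w!(2*b)"] stp_cases[of "w!(2*b+1)"]
        stp_cases[of "w!(2*b+2)"] stp_cases[of "w!(2*b+3)"] by auto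
    then have "w!(2*b) = False" "w!(2*b+1) = False" "w!(2*b+2) = False" "w!(2*b+3) = False" "c = 4"
      using stp_m1 by auto
    moreover have "j < 4 \<Longrightarrow> j = 0 \<or> j = 1 \<or> j = 2 \<or> j = 3" for j :: nat by auto
    ultimately show ?thesis using g2 by fastforce
  qed
  define w1 where "w1 = take (2*b) w"
  define w2 where "w2 = drop (2*a) w"
  have mid: "take (2*g) (drop (2*b) w) = replicate (2*g) False"
    by (rule nth_equalityI) (use lw ab a1 down in auto)
  have decomp: "w = w1 @ replicate (2*g) False @ w2"
  proof -
    have "w = take (2*b) w @ drop (2*b) w" by simp
    also have "drop (2*b) w = take (2*g) (drop (2*b) w) @ drop (2*g) (drop (2*b) w)"
      by (rule append_take_drop_id[symmetric])
    also have "drop (2*g) (drop (2*b) w) = w2" using ab by (simp add: w2_def add.commute)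
    finally show ?thesis unfolding mid w1_def .
  qed
  have w1P: "w1 \<in> PosG (2*b) 0 (2*int g)"
  proof -
    have "length w1 = 2*b" using lw ab a1 w1_def by simp
    moreover have "\<forall>t\<in>{1..2*b}. 0 + H w1 t \<ge> 1"
    proof
      fix t assume t: "t \<in> {1..2*b}"
      then have "t \<in> {1..2*a-1}" using ab g by auto
      then have "H w t > 0" using Apos by blast
      moreover have "H w1 t = H w t" using t w1_def H_take by auto
      ultimately show "0 + H w1 t \<ge> 1" by simp
    qed
    moreover have "ht w1 = 2 * int g" using Hb c_def down w1_def by (simp add: H_def)
    ultimately show ?thesis by (simp add: PosG_def)
  qed
  have Hw2: "H w (2*a + t) = H w2 t" for t
  proof -
    have "w = take (2*a) w @ w2" by (simp add: w2_def)
    then have "H w (2*a + t) = ht (take (2*a) w) + H w2 t"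
      using H_app_ge[of "take (2*a) w" "2*a+t" w2] lw a1 by simp
    moreover have "ht (take (2*a) w) = 0" using a1 by (simp add: H_def)
    ultimately show ?thesis by simp
  qed
  have w2B: "w2 \<in> BelG (2*(n-g-b)) (2*int g)"
  proof -
    have l2: "length w2 = 2*(n-g-b)" using lw ab a1 w2_def by simp
    moreover have "\<forall>t<2*(n-g-b). H w2 t < 2 * int g"
    proof (intro allI impI)
      fix t assume t: "t < 2*(n-g-b)"
      show "H w2 t < 2 * int g"
      proof (cases "t = 0")
        case True then show ?thesis using g by auto
      next
        case False
        then have "2*a + t \<in> {2*b+1..2*n-1}" using t ab by auto
        then have "H w (2*a+t) < c" using Bb by blast
        then show ?thesis using Hw2[of t] down by simp
      qed
    qed
    moreover have "ht w2 = 2 * int g"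
    proof -
      have "ht w2 = H w2 (2*(n-a))" using l2 ab by (simp add: H_len)
      also have "\<dots> = H w (2*n)"
      proof -
        have "2*a + 2*(n-a) = 2*n" using a1 by simp
        then show ?thesis using Hw2[of "2*(n-a)"] by metis
      qed
      finally show ?thesis using down c_def by simp
    qed
    ultimately show ?thesis by (simp add: BelG_def)
  qed
  have "w \<in> Jset g n b" unfolding Jset_def
    using decomp w1P w2B by (auto intro!: image_eqI[of _ _ "(w1,w2)"])
  moreover have "b + g < n" using ab a1 by simp
  ultimately show ?thesis using ab by blast
qed


lemma finite_len: "finite {w::bool list. length w = L}"
  using finite_lists_length_eq[of "UNIV::bool set"] by simp

lemma Qw_not: "Qw g n (map Not w) = Qw g n w" by (simp add: Qw_def)

lemma map_Not_inj: "map Not x = map Not y \<Longrightarrow> x = y"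
proof -
  assume "map Not x = map Not y"
  then have "map Not (map Not x) = map Not (map Not y)" by simp
  then show "x = y" by (simp add: comp_def)
qed

definition Sp :: "nat \<Rightarrow> nat \<Rightarrow> bool list set" where
  "Sp g n = {w. length w = 2*n \<and> Qw g n w \<and> H w 1 > 0}"

lemma finite_Sp: "finite (Sp g n)"
  by (rule finite_subset[OF _ finite_len[of "2*n"]]) (auto simp: Sp_def)

lemma card_S:
  assumes n: "n \<ge> 1"
  shows "card {w. length w = 2*n \<and> Qw g n w} = 2 * card (Sp g n)"
proof -
  let ?S = "{w. length w = 2*n \<and> Qw g n w}"
  have S: "?S = Sp g n \<union> map Not ` Sp g n"
  proof
    show "?S \<subseteq> Sp g n \<union> map Not ` Sp g n"
    proof
      fix w assume w: "w \<in> ?S"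
      then have "0 < length w" using n by simp
      then have h1: "H w 1 = stp (w!0)" using H_Suc[of 0 w] by simp
      show "w \<in> Sp g n \<union> map Not ` Sp g n"
      proof (cases "H w 1 > 0")
        case True then show ?thesis using w by (simp add: Sp_def)
      next
        case False
        then have "H w 1 < 0" using h1 stp_cases[of "w!0"] by auto
        then have "map Not w \<in> Sp g n" using w Qw_not by (simp add: Sp_def)
        moreover have "w = map Not (map Not w)" by (simp add: comp_def)
        ultimately show ?thesis by blast
      qed
    qed
    show "Sp g n \<union> map Not ` Sp g n \<subseteq> ?S"
      using Qw_not by (auto simp: Sp_def)
  qed
  have disj: "Sp g n \<inter> map Not ` Sp g n = {}" by (auto simp: Sp_def)
  have inj: "inj_on (map Not) (Sp g n)" by (rule inj_onI) (rule map_Not_inj)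
  have "card ?S = card (Sp g n) + card (map Not ` Sp g n)"
    unfolding S by (rule card_Un_disjoint) (use finite_Sp disj in auto)
  also have "card (map Not ` Sp g n) = card (Sp g n)" by (rule card_image[OF inj])
  finally show ?thesis by simp
qed

lemma Jset_D1:
  assumes "w \<in> Jset g n k" "1 \<le> k" "k + g < n" "g \<ge> 1"
  shows "w \<in> Sp g n \<and> (LEAST j. 1 \<le> j \<and> j < n \<and> H w (2*j) = 0) = k + g"
proof -
  obtain w1 w2 where "w1 \<in> PosG (2*k) 0 (2 * int g)" "w2 \<in> BelG (2*(n-g-k)) (2 * int g)"
    "w = w1 @ replicate (2*g) False @ w2" using assms(1) unfolding Jset_def by auto
  from D1[OF assms(2,3,4) this] show ?thesis by (simp add: Sp_def)
qed

lemma Sp_UN: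
  assumes g: "g = 1 \<or> g = 2"
  shows "Sp g n = (\<Union>k\<in>{1..n-g-1}. Jset g n k)"
proof
  show "Sp g n \<subseteq> (\<Union>k\<in>{1..n-g-1}. Jset g n k)"
  proof
    fix w assume "w \<in> Sp g n"
    then obtain k where "1 \<le> k" "k + g < n" "w \<in> Jset g n k"
      using D2[OF g] by (auto simp: Sp_def)
    then show "w \<in> (\<Union>k\<in>{1..n-g-1}. Jset g n k)" by auto
  qed
  show "(\<Union>k\<in>{1..n-g-1}. Jset g n k) \<subseteq> Sp g n"
    using Jset_D1 g by fastforce
qed

lemma card_J: "card (Jset g n k) = card (PosG (2*k) 0 (2*int g)) * card (BelG (2*(n-g-k)) (2*int g))"
proof -
  have inj: "inj_on (\<lambda>(w1,w2). w1 @ replicate (2*g) False @ w2) (PosG (2*k) 0 (2 * int g) \<times> BelG (2*(n-g-k)) (2 * int g))"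
  proof (rule inj_onI)
    fix p q assume p: "p \<in> PosG (2*k) 0 (2 * int g) \<times> BelG (2*(n-g-k)) (2 * int g)"
      and q: "q \<in> PosG (2*k) 0 (2 * int g) \<times> BelG (2*(n-g-k)) (2 * int g)"
      and e: "(\<lambda>(w1,w2). w1 @ replicate (2*g) False @ w2) p = (\<lambda>(w1,w2). w1 @ replicate (2*g) False @ w2) q"
    obtain a b where ab: "p = (a,b)" by force
    obtain c d where cd: "q = (c,d)" by force
    have "length a = length c" using p q ab cd by (auto simp: PosG_def)
    then show "p = q" using e ab cd by (auto simp: append_eq_append_conv)
  qed
  show ?thesis unfolding Jset_def card_image[OF inj] card_cartesian_product ..
qed

lemma Mo_formula:
  assumes g: "g = 1 \<or> g = 2" and n: "n \<ge> 1"
  shows "Mo g n = 2 * (\<Sum>k\<in>{1..n-g-1}. card (PosG (2*k) 0 (2*int g)) * card (PosG (2*(n-g-k)) 0 (2*int g)))"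
proof -
  have fin: "finite (Jset g n k)" for k
    unfolding Jset_def by (intro finite_imageI finite_cartesian_product finite_PosG)
      (rule finite_subset[OF _ finite_len[of "2*(n-g-k)"]], auto simp: BelG_def)
  have disj: "\<forall>i\<in>{1..n-g-1}. \<forall>j\<in>{1..n-g-1}. i \<noteq> j \<longrightarrow> Jset g n i \<inter> Jset g n j = {}"
  proof (intro ballI impI)
    fix i j assume i: "i \<in> {1..n-g-1}" and j: "j \<in> {1..n-g-1}" and ij: "i \<noteq> j"
    show "Jset g n i \<inter> Jset g n j = {}"
    proof (rule ccontr)
      assume "Jset g n i \<inter> Jset g n j \<noteq> {}"
      then obtain w where "w \<in> Jset g n i" "w \<in> Jset g n j" by blast
      then have "i + g = j + g" using Jset_D1[of w g n i] Jset_D1[of w g n j] i j g by auto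
      then show False using ij by simp
    qed
  qed
  have "Mo g n = 2 * card (Sp g n)" using Mo_walks card_S[OF n] by simp
  also have "card (Sp g n) = (\<Sum>k\<in>{1..n-g-1}. card (Jset g n k))"
    unfolding Sp_UN[OF g] by (rule card_UN_disjoint) (use fin disj in auto)
  also have "\<dots> = (\<Sum>k\<in>{1..n-g-1}. card (PosG (2*k) 0 (2*int g)) * card (PosG (2*(n-g-k)) 0 (2*int g)))"
    by (simp add: card_J card_BelG)
  finally show ?thesis .
qed



lemma vand_d: "(\<Sum>j=d..K. (K choose j) * (K choose (j-d))) = (2*K) choose (K+d)"
proof -
  have "(2*K) choose (K+d) = (\<Sum>j\<le>K+d. (K choose j) * (K choose (K+d-j)))"
    using vandermonde[of K K "K+d"] by (simp add: mult_2)
  also have "\<dots> = (\<Sum>j=d..K. (K choose j) * (K choose (j-d)))"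
  proof (rule sum.mono_neutral_cong_right)
    show "finite {..K+d}" by simp
    show "{d..K} \<subseteq> {..K+d}" by auto
    show "\<forall>i\<in>{..K+d} - {d..K}. (K choose i) * (K choose (K+d-i)) = 0"
    proof
      fix i assume "i \<in> {..K+d} - {d..K}"
      then have "i < d \<or> K < i" by auto
      then show "(K choose i) * (K choose (K+d-i)) = 0"
        by (auto simp: binomial_eq_0)
    qed
    show "(K choose x) * (K choose (K+d-x)) = (K choose x) * (K choose (x-d))" if "x \<in> {d..K}" for x
    proof -
      have "x - d \<le> K" using that by auto
      then have "K choose (x-d) = K choose (K - (x-d))" by (rule binomial_symmetric)
      moreover have "K - (x-d) = K+d-x" using that by auto
      ultimately show ?thesis by simp
    qed
  qed
  finally show ?thesis by simp
qed

lemma vand_real: "(\<Sum>j=d..K. real (K choose j) * real (K choose (j-d))) = real ((2*K) choose (K+d))"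
proof -
  have "real ((2*K) choose (K+d)) = real (\<Sum>j=d..K. (K choose j) * (K choose (j-d)))"
    by (simp only: vand_d)
  also have "\<dots> = (\<Sum>j=d..K. real (K choose j) * real (K choose (j-d)))" by simp
  finally show ?thesis by simp
qed

lemma inner_shift: fixes h :: "nat \<Rightarrow> real" shows "(\<Sum>m=l+d..l+J. h (m - l)) = (\<Sum>j=d..J. h j)"
  using sum.shift_bounds_cl_nat_ivl[of "\<lambda>m. h (m - l)" d l J] by (simp add: add.commute)

lemma triple:
  fixes c :: real
  shows "(\<Sum>l=d..K. \<Sum>m=l+d..l+J. c * real (K choose l) * real (K choose (l-d))
            * real (J choose (m-l)) * real (J choose (m-l-d)))
       = c * real ((2*K) choose (K+d)) * real ((2*J) choose (J+d))"
proof -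
  have "(\<Sum>m=l+d..l+J. c * real (K choose l) * real (K choose (l-d))
            * real (J choose (m-l)) * real (J choose (m-l-d)))
        = c * real (K choose l) * real (K choose (l-d)) * real ((2*J) choose (J+d))" for l
  proof -
    have "(\<Sum>m=l+d..l+J. c * real (K choose l) * real (K choose (l-d))
            * real (J choose (m-l)) * real (J choose (m-l-d)))
       = (\<Sum>m=l+d..l+J. (c * real (K choose l) * real (K choose (l-d)))
            * (real (J choose (m-l)) * real (J choose ((m-l)-d))))"
      by (simp add: mult.assoc)
    also have "\<dots> = (c * real (K choose l) * real (K choose (l-d))) *
         (\<Sum>m=l+d..l+J. real (J choose (m-l)) * real (J choose ((m-l)-d)))"
      by (simp add: sum_distrib_left)
    also have "(\<Sum>m=l+d..l+J. real (J choose (m-l)) * real (J choose ((m-l)-d)))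
        = (\<Sum>j=d..J. real (J choose j) * real (J choose (j-d)))"
      by (rule inner_shift[where h = "\<lambda>j. real (J choose j) * real (J choose (j-d))"])
    also have "\<dots> = real ((2*J) choose (J+d))" by (rule vand_real)
    finally show ?thesis .
  qed
  then have "(\<Sum>l=d..K. \<Sum>m=l+d..l+J. c * real (K choose l) * real (K choose (l-d))
            * real (J choose (m-l)) * real (J choose (m-l-d)))
        = (\<Sum>l=d..K. (c * real ((2*J) choose (J+d))) * (real (K choose l) * real (K choose (l-d))))"
    by (simp add: mult_ac)
  also have "\<dots> = (c * real ((2*J) choose (J+d))) * (\<Sum>l=d..K. real (K choose l) * real (K choose (l-d)))"
    by (simp add: sum_distrib_left)
  also have "\<dots> = c * real ((2*K) choose (K+d)) * real ((2*J) choose (J+d))"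
    by (simp add: vand_real)
  finally show ?thesis .
qed

lemma P_real:
  assumes k: "k \<ge> 1" and g: "g \<ge> 1"
  shows "real (card (PosG (2*k) 0 (2*int g))) = real g * real ((2*k) choose (k+g)) / real k"
proof -
  have i: "int (card (PosG (2*k) 0 (2*int g))) = int ((2*k-1) choose (k+g-1)) - int ((2*k-1) choose (k+g))"
    using card_Pos_formula[OF k g] .
  have "real_of_int (int (card (PosG (2*k) 0 (2*int g)))) = real_of_int (int ((2*k-1) choose (k+g-1)) - int ((2*k-1) choose (k+g)))"
    using i by simp
  then have r: "real (card (PosG (2*k) 0 (2*int g))) = real ((2*k-1) choose (k+g-1)) - real ((2*k-1) choose (k+g))"
    by simp
  have a1: "(k+g) * ((2*k) choose (k+g)) = (2*k) * ((2*k-1) choose (k+g-1))"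
    using binomial_absorption[of "k+g-1" "2*k"] k by simp
  have a2: "(2*k-(k+g)) * ((2*k) choose (k+g)) = (2*k) * ((2*k-1) choose (k+g))"
    using binomial_absorb_comp[of "2*k" "k+g"] by simp
  show ?thesis
  proof (cases "g \<le> k")
    case True
    have b1: "real (k+g) * real ((2*k) choose (k+g)) = real (2*k) * real ((2*k-1) choose (k+g-1))"
      using a1 by (metis of_nat_mult)
    have b2: "real (2*k-(k+g)) * real ((2*k) choose (k+g)) = real (2*k) * real ((2*k-1) choose (k+g))"
      using a2 by (metis of_nat_mult)
    have "real (2*k-(k+g)) = real k - real g" using True by simp
    then have "real (2*k) * (real ((2*k-1) choose (k+g-1)) - real ((2*k-1) choose (k+g)))
       = 2 * real g * real ((2*k) choose (k+g))"
      using b1 b2 by (simp add: algebra_simps)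
    then have X: "real k * real (card (PosG (2*k) 0 (2*int g))) = real g * real ((2*k) choose (k+g))"
      unfolding r by simp
    have kp: "real k > 0" using k by simp
    show ?thesis using X kp by (simp add: field_simps)
  next
    case False
    then have z: "(2*k) choose (k+g) = 0" "(2*k-1) choose (k+g) = 0" by (auto simp: binomial_eq_0)
    have z3: "(2*k-1) choose (k+g-1) = 0" using a1 k z(1) by simp
    show ?thesis unfolding r z3 z by simp
  qed
qed



lemma LHS1:
  assumes n: "n \<ge> 2"
  shows "real (Mo 1 n) = 2 * (\<Sum>k=1..n-2. (real ((2*k) choose (k+1)) / real k) *
            (real ((2*(n-1-k)) choose ((n-1-k)+1)) / real (n-1-k)))"
proof -
  have "real (Mo 1 n) = 2 * (\<Sum>k=1..n-2. real (card (PosG (2*k) 0 (2*int 1))) * real (card (PosG (2*(n-1-k)) 0 (2*int 1))))"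
    using Mo_formula[of 1 n] n by (simp add: numeral_2_eq_2)
  also have "(\<Sum>k=1..n-2. real (card (PosG (2*k) 0 (2*int 1))) * real (card (PosG (2*(n-1-k)) 0 (2*int 1))))
     = (\<Sum>k=1..n-2. (real ((2*k) choose (k+1)) / real k) *
            (real ((2*(n-1-k)) choose ((n-1-k)+1)) / real (n-1-k)))"
  proof (rule sum.cong[OF refl])
    fix k assume k: "k \<in> {1..n-2}"
    have a: "real (card (PosG (2*k) 0 (2*int 1))) = real ((2*k) choose (k+1)) / real k"
      using P_real[of k 1] k by simp
    define j where "j = n-1-k"
    have j1: "j \<ge> 1" using k j_def by auto
    have b0: "real (card (PosG (2*j) 0 (2*int 1))) = real ((2*j) choose (j+1)) / real j"
      using P_real[of j 1] j1 by simp
    note b = b0[unfolded j_def]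
    show "real (card (PosG (2*k) 0 (2*int 1))) * real (card (PosG (2*(n-1-k)) 0 (2*int 1)))
       = (real ((2*k) choose (k+1)) / real k) * (real ((2*(n-1-k)) choose ((n-1-k)+1)) / real (n-1-k))"
      unfolding a b ..
  qed
  finally show ?thesis .
qed

lemma LHS2:
  assumes n: "n \<ge> 2"
  shows "real (Mo 2 n) = 2 * (\<Sum>k=1..n-3. (2 * real ((2*k) choose (k+2)) / real k) *
            (2 * real ((2*(n-2-k)) choose ((n-2-k)+2)) / real (n-2-k)))"
proof -
  have "real (Mo 2 n) = 2 * (\<Sum>k=1..n-3. real (card (PosG (2*k) 0 (2*int 2))) * real (card (PosG (2*(n-2-k)) 0 (2*int 2))))"
    using Mo_formula[of 2 n] n by (simp add: numeral_3_eq_3)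
  also have "(\<Sum>k=1..n-3. real (card (PosG (2*k) 0 (2*int 2))) * real (card (PosG (2*(n-2-k)) 0 (2*int 2))))
     = (\<Sum>k=1..n-3. (2 * real ((2*k) choose (k+2)) / real k) *
            (2 * real ((2*(n-2-k)) choose ((n-2-k)+2)) / real (n-2-k)))"
  proof (rule sum.cong[OF refl])
    fix k assume k: "k \<in> {1..n-3}"
    have a: "real (card (PosG (2*k) 0 (2*int 2))) = 2 * real ((2*k) choose (k+2)) / real k"
      using P_real[of k 2] k by simp
    define j where "j = n-2-k"
    have j1: "j \<ge> 1" using k j_def by auto
    have b0: "real (card (PosG (2*j) 0 (2*int 2))) = 2 * real ((2*j) choose (j+2)) / real j"
      using P_real[of j 2] j1 by simp
    note b = b0[unfolded j_def]
    show "real (card (PosG (2*k) 0 (2*int 2))) * real (card (PosG (2*(n-2-k)) 0 (2*int 2)))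
       = (2 * real ((2*k) choose (k+2)) / real k) * (2 * real ((2*(n-2-k)) choose ((n-2-k)+2)) / real (n-2-k))"
      unfolding a b ..
  qed
  finally show ?thesis .
qed

theorem mainTheorem6:
  fixes n :: nat
  assumes "n \<ge> 2"
  shows "(real (Mo 1 n) = 2 * (\<Sum>i=2..n-1. \<Sum>l1=1..n-i. \<Sum>m=l1+1..i+l1-1.
            1 / (real (i-1) * real (n-i)) * real ((n-i) choose l1) * real ((n-i) choose (l1-1))
            * real ((i-1) choose (m-l1)) * real ((i-1) choose (m-l1-1)))) \<and>
         (real (Mo 2 n) = 2 * (\<Sum>i=3..n-2. \<Sum>l1=2..n-i. \<Sum>m=l1+2..i+l1-2.
            4 / (real (i-2) * real (n-i)) * real ((n-i) choose l1) * real ((n-i) choose (l1-2))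
            * real ((i-2) choose (m-l1)) * real ((i-2) choose (m-l1-2))))"
proof
  have R1: "(\<Sum>i=2..n-1. \<Sum>l1=1..n-i. \<Sum>m=l1+1..i+l1-1.
            1 / (real (i-1) * real (n-i)) * real ((n-i) choose l1) * real ((n-i) choose (l1-1))
            * real ((i-1) choose (m-l1)) * real ((i-1) choose (m-l1-1)))
      = (\<Sum>i=2..n-1. 1 / (real (i-1) * real (n-i)) * real ((2*(n-i)) choose ((n-i)+1))
            * real ((2*(i-1)) choose ((i-1)+1)))"
  proof (rule sum.cong[OF refl])
    fix i assume i: "i \<in> {2..n-1}"
    have eq: "\<And>l1. i+l1-1 = l1+(i-1)" using i by auto
    show "(\<Sum>l1=1..n-i. \<Sum>m=l1+1..i+l1-1.
            1 / (real (i-1) * real (n-i)) * real ((n-i) choose l1) * real ((n-i) choose (l1-1))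
            * real ((i-1) choose (m-l1)) * real ((i-1) choose (m-l1-1)))
         = 1 / (real (i-1) * real (n-i)) * real ((2*(n-i)) choose ((n-i)+1))
            * real ((2*(i-1)) choose ((i-1)+1))"
      unfolding eq by (rule triple)
  qed
  also have "\<dots> = (\<Sum>k=1..n-2. 1 / (real (Suc k - 1) * real (n - Suc k)) * real ((2*(n - Suc k)) choose ((n - Suc k)+1))
            * real ((2*(Suc k - 1)) choose ((Suc k - 1)+1)))"
  proof -
    have "{2..n-1} = {Suc 1..Suc (n-2)}" using assms by auto
    then show ?thesis by (simp only: sum.shift_bounds_cl_Suc_ivl)
  qed
  also have "\<dots> = (\<Sum>k=1..n-2. (real ((2*k) choose (k+1)) / real k) *
            (real ((2*(n-1-k)) choose ((n-1-k)+1)) / real (n-1-k)))"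
    by (rule sum.cong[OF refl]) (simp add: field_simps)
  finally show "real (Mo 1 n) = 2 * (\<Sum>i=2..n-1. \<Sum>l1=1..n-i. \<Sum>m=l1+1..i+l1-1.
            1 / (real (i-1) * real (n-i)) * real ((n-i) choose l1) * real ((n-i) choose (l1-1))
            * real ((i-1) choose (m-l1)) * real ((i-1) choose (m-l1-1)))"
    using LHS1[OF assms] by simp
next
  have R2: "(\<Sum>i=3..n-2. \<Sum>l1=2..n-i. \<Sum>m=l1+2..i+l1-2.
            4 / (real (i-2) * real (n-i)) * real ((n-i) choose l1) * real ((n-i) choose (l1-2))
            * real ((i-2) choose (m-l1)) * real ((i-2) choose (m-l1-2)))
      = (\<Sum>i=3..n-2. 4 / (real (i-2) * real (n-i)) * real ((2*(n-i)) choose ((n-i)+2))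
            * real ((2*(i-2)) choose ((i-2)+2)))"
  proof (rule sum.cong[OF refl])
    fix i assume i: "i \<in> {3..n-2}"
    have eq: "\<And>l1. i+l1-2 = l1+(i-2)" using i by auto
    show "(\<Sum>l1=2..n-i. \<Sum>m=l1+2..i+l1-2.
            4 / (real (i-2) * real (n-i)) * real ((n-i) choose l1) * real ((n-i) choose (l1-2))
            * real ((i-2) choose (m-l1)) * real ((i-2) choose (m-l1-2)))
         = 4 / (real (i-2) * real (n-i)) * real ((2*(n-i)) choose ((n-i)+2))
            * real ((2*(i-2)) choose ((i-2)+2))"
      unfolding eq by (rule triple)
  qed
  have main: "(\<Sum>i=3..n-2. 4 / (real (i-2) * real (n-i)) * real ((2*(n-i)) choose ((n-i)+2))
            * real ((2*(i-2)) choose ((i-2)+2)))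
      = (\<Sum>k=1..n-3. (2 * real ((2*k) choose (k+2)) / real k) *
            (2 * real ((2*(n-2-k)) choose ((n-2-k)+2)) / real (n-2-k)))"
  proof (cases "n \<le> 3")
    case True
    then have "{3..n-2} = {}" "{1..n-3} = {}" by auto
    then show ?thesis by simp
  next
    case False
    then have n4: "n \<ge> 4" by simp
    have "(\<Sum>i=3..n-2. 4 / (real (i-2) * real (n-i)) * real ((2*(n-i)) choose ((n-i)+2))
            * real ((2*(i-2)) choose ((i-2)+2)))
        = (\<Sum>k=1..n-4. 4 / (real (k+2-2) * real (n-(k+2))) * real ((2*(n-(k+2))) choose ((n-(k+2))+2))
            * real ((2*(k+2-2)) choose ((k+2-2)+2)))"
    proof -
      have "{3..n-2} = {1+2..(n-4)+2}" using n4 by auto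
      then show ?thesis by (simp only: sum.shift_bounds_cl_nat_ivl)
    qed
    also have "\<dots> = (\<Sum>k=1..n-4. (2 * real ((2*k) choose (k+2)) / real k) *
            (2 * real ((2*(n-2-k)) choose ((n-2-k)+2)) / real (n-2-k)))"
      by (rule sum.cong[OF refl]) (simp add: field_simps)
    also have "\<dots> = (\<Sum>k=1..n-3. (2 * real ((2*k) choose (k+2)) / real k) *
            (2 * real ((2*(n-2-k)) choose ((n-2-k)+2)) / real (n-2-k)))"
    proof -
      have e: "n - 3 = Suc (n-4)" using n4 by simp
      have z: "n - 2 - Suc (n-4) = 1" using n4 by simp
      show ?thesis unfolding e sum.cl_ivl_Suc using z by simp
    qed
    finally show ?thesis .
  qed
  show "real (Mo 2 n) = 2 * (\<Sum>i=3..n-2. \<Sum>l1=2..n-i. \<Sum>m=l1+2..i+l1-2.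
            4 / (real (i-2) * real (n-i)) * real ((n-i) choose l1) * real ((n-i) choose (l1-2))
            * real ((i-2) choose (m-l1)) * real ((i-2) choose (m-l1-2)))"
    unfolding R2 main using LHS2[OF assms] .
qed


end
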